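(* Let $\mathbf G=(G,\tau)$ be a real linear algebraic group, write ${}^\gamma g=\tau(g)$, and let $\mathbf Y$ be a right homogeneous space of $\mathbf G$ with complex points $Y$ carrying a compatible complex conjugation $y\mapsto {}^\gamma y$ (i.e. ${}^\gamma(y\cdot g)={}^\gamma y\cdot{}^\gamma g$). Fix $y_0\in Y$, let $H=\mathrm{Stab}_G(y_0)$, and let $g_{y_0}\in G$ satisfy ${}^\gamma y_0=y_0\cdot g_{y_0}$. Let $z\in Hg_{y_0}$ satisfy $z\cdot{}^\gamma z=1$. Then $\varphi_z\colon g\mapsto z\,{}^\gamma g\,z^{-1}$ is an anti-regular involution of $G$ with $\varphi_z(H)=H$; put ${}_z\mathbf G=(G,\varphi_z)$ and ${}_z\mathbf H=(H,\varphi_z|_H)$. Consider the composite map $$H^1({}_z\mathbf H)\to H^1({}_z\mathbf G)\to H^1\mathbf G,\qquad [h]\mapsto[h]\mapsto[hz].$$ Then there exists $z'\in Hg_{y_0}\cap B^1\mathbf G$ if and only if the image of this composite map contains the neutral class $[1]\in H^1\mathbf G$.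
   Context: For a real group $(G,\tau)$: $Z^1=\{z\in G: z\tau(z)=1\}$, $B^1=\{g^{-1}\tau(g): g\in G\}$, $z\sim b^{-1}z\tau(b)$, $H^1=Z^1/\sim$ with neutral class $[1]$. Anti-regular maps: $\varphi$ such that $x\mapsto\overline{f(\varphi(x))}$ is regular for each regular function $f$. *)

theory Defs
  imports "HOL-Analysis.Analysis"
begin

text \<open>Complex linear algebraic groups are modelled as Zariski-closed subgroups of
  GL_n(C), realised as sets of matrices of type complex^'n^'n.\<close>

inductive_set poly_fun :: "(complex^'n^'n \<Rightarrow> complex) set" where
  pf_const: "(\<lambda>_. c) \<in> poly_fun"
| pf_coord: "(\<lambda>x. x $ i $ j) \<in> poly_fun"
| pf_add: "p \<in> poly_fun \<Longrightarrow> q \<in> poly_fun \<Longrightarrow> (\<lambda>x. p x + q x) \<in> poly_fun"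
| pf_mult: "p \<in> poly_fun \<Longrightarrow> q \<in> poly_fun \<Longrightarrow> (\<lambda>x. p x * q x) \<in> poly_fun"

definition matrix_subgroup :: "(complex^'n^'n) set \<Rightarrow> bool" where
  "matrix_subgroup G \<longleftrightarrow> mat 1 \<in> G \<and> (\<forall>x\<in>G. invertible x) \<and>
     (\<forall>x\<in>G. \<forall>y\<in>G. x ** y \<in> G) \<and> (\<forall>x\<in>G. matrix_inv x \<in> G)"

definition linear_algebraic_group :: "(complex^'n^'n) set \<Rightarrow> bool" where
  "linear_algebraic_group G \<longleftrightarrow> matrix_subgroup G \<and>
     (\<exists>S \<subseteq> poly_fun. G = {x. invertible x \<and> (\<forall>p\<in>S. p x = 0)})"

definition regular_on :: "(complex^'n^'n) set \<Rightarrow> (complex^'n^'n \<Rightarrow> complex) \<Rightarrow> bool" where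
  "regular_on G f \<longleftrightarrow> (\<exists>p\<in>poly_fun. \<exists>k::nat. \<forall>x\<in>G. f x = p x / det x ^ k)"

definition anti_regular :: "(complex^'n^'n) set \<Rightarrow> (complex^'n^'n \<Rightarrow> complex^'n^'n) \<Rightarrow> bool" where
  "anti_regular G \<phi> \<longleftrightarrow> \<phi> ` G \<subseteq> G \<and>
     (\<forall>f. regular_on G f \<longrightarrow> regular_on G (\<lambda>x. cnj (f (\<phi> x))))"

definition anti_regular_involution :: "(complex^'n^'n) set \<Rightarrow> (complex^'n^'n \<Rightarrow> complex^'n^'n) \<Rightarrow> bool" where
  "anti_regular_involution G \<phi> \<longleftrightarrow> anti_regular G \<phi> \<and>
     (\<forall>x\<in>G. \<forall>y\<in>G. \<phi> (x ** y) = \<phi> x ** \<phi> y) \<and> (\<forall>x\<in>G. \<phi> (\<phi> x) = x)"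

definition real_group :: "(complex^'n^'n) set \<Rightarrow> (complex^'n^'n \<Rightarrow> complex^'n^'n) \<Rightarrow> bool" where
  "real_group G \<tau> \<longleftrightarrow> linear_algebraic_group G \<and> anti_regular_involution G \<tau>"

definition Z1 :: "(complex^'n^'n) set \<Rightarrow> (complex^'n^'n \<Rightarrow> complex^'n^'n) \<Rightarrow> (complex^'n^'n) set" where
  "Z1 G \<tau> = {z \<in> G. z ** \<tau> z = mat 1}"

definition B1 :: "(complex^'n^'n) set \<Rightarrow> (complex^'n^'n \<Rightarrow> complex^'n^'n) \<Rightarrow> (complex^'n^'n) set" where
  "B1 G \<tau> = {matrix_inv g ** \<tau> g | g. g \<in> G}"

definition coh_rel :: "(complex^'n^'n) set \<Rightarrow> (complex^'n^'n \<Rightarrow> complex^'n^'n) \<Rightarrow> ((complex^'n^'n) \<times> (complex^'n^'n)) set" where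
  "coh_rel G \<tau> = {(z, w). z \<in> Z1 G \<tau> \<and> w \<in> Z1 G \<tau> \<and> (\<exists>b\<in>G. w = matrix_inv b ** z ** \<tau> b)}"

definition H1 :: "(complex^'n^'n) set \<Rightarrow> (complex^'n^'n \<Rightarrow> complex^'n^'n) \<Rightarrow> (complex^'n^'n) set set" where
  "H1 G \<tau> = Z1 G \<tau> // coh_rel G \<tau>"

definition cls :: "(complex^'n^'n) set \<Rightarrow> (complex^'n^'n \<Rightarrow> complex^'n^'n) \<Rightarrow> complex^'n^'n \<Rightarrow> (complex^'n^'n) set" where
  "cls G \<tau> z = coh_rel G \<tau> `` {z}"

definition twist :: "(complex^'n^'n \<Rightarrow> complex^'n^'n) \<Rightarrow> complex^'n^'n \<Rightarrow> complex^'n^'n \<Rightarrow> complex^'n^'n" where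
  "twist \<tau> z g = z ** \<tau> g ** matrix_inv z"

definition right_homogeneous_space ::
  "(complex^'n^'n) set \<Rightarrow> 'y set \<Rightarrow> ('y \<Rightarrow> complex^'n^'n \<Rightarrow> 'y) \<Rightarrow> bool" where
  "right_homogeneous_space G Y act \<longleftrightarrow>
     (\<forall>y\<in>Y. \<forall>g\<in>G. act y g \<in> Y) \<and> (\<forall>y\<in>Y. act y (mat 1) = y) \<and>
     (\<forall>y\<in>Y. \<forall>g\<in>G. \<forall>h\<in>G. act (act y g) h = act y (g ** h)) \<and>
     Y \<noteq> {} \<and> (\<forall>y\<in>Y. \<forall>y'\<in>Y. \<exists>g\<in>G. act y g = y')"

definition compatible_conj ::
  "(complex^'n^'n) set \<Rightarrow> (complex^'n^'n \<Rightarrow> complex^'n^'n) \<Rightarrow> 'y set \<Rightarrow> ('y \<Rightarrow> complex^'n^'n \<Rightarrow> 'y) \<Rightarrow> ('y \<Rightarrow> 'y) \<Rightarrow> bool" where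
  "compatible_conj G \<tau> Y act c \<longleftrightarrow> c ` Y \<subseteq> Y \<and> (\<forall>y\<in>Y. c (c y) = y) \<and>
     (\<forall>y\<in>Y. \<forall>g\<in>G. c (act y g) = act (c y) (\<tau> g))"

definition stabilizer :: "(complex^'n^'n) set \<Rightarrow> ('y \<Rightarrow> complex^'n^'n \<Rightarrow> 'y) \<Rightarrow> 'y \<Rightarrow> (complex^'n^'n) set" where
  "stabilizer G act y0 = {g \<in> G. act y0 g = y0}"

end

theory Submission
  imports Defs
begin

lemma mi:
  fixes A :: "'a::field^'n^'n"
  assumes "invertible A"
  shows "A ** matrix_inv A = mat 1" "matrix_inv A ** A = mat 1"
  using someI_ex[OF assms[unfolded invertible_def]] unfolding matrix_inv_def by auto

lemma mi_unique:
  fixes A B :: "'a::field^'n^'n"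
  assumes "A ** B = mat 1" shows "matrix_inv A = B"
proof -
  have inv: "invertible A" using assms invertible_right_inverse by blast
  have "matrix_inv A = matrix_inv A ** (A ** B)" using assms by simp
  also have "\<dots> = B" by (simp add: matrix_mul_assoc mi(2)[OF inv])
  finally show ?thesis .
qed

lemma mi_canc:
  fixes A x :: "'a::field^'n^'n"
  assumes "invertible x"
  shows "A ** x ** matrix_inv x = A" "A ** matrix_inv x ** x = A"
  by (simp_all add: matrix_mul_assoc[symmetric] mi[OF assms])

lemma pf_sum:
  assumes "finite S" "\<And>i. i \<in> S \<Longrightarrow> (\<lambda>x. f i x) \<in> poly_fun"
  shows "(\<lambda>x. \<Sum>i\<in>S. f i x) \<in> poly_fun"
  using assms
proof (induction S rule: finite_induct)
  case empty
  then show ?case using pf_const[of 0] by simp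
next
  case (insert a S)
  then show ?case using pf_add[of "\<lambda>x. f a x" "\<lambda>x. \<Sum>i\<in>S. f i x"] by simp
qed

lemma pf_left:
  "(\<lambda>x::complex^'n^'n. (A ** x) $ i $ k) \<in> poly_fun"
proof -
  have "(\<lambda>x::complex^'n^'n. \<Sum>l\<in>UNIV. A$i$l * x$l$k) \<in> poly_fun"
    by (rule pf_sum) (auto intro: pf_mult pf_const pf_coord)
  then show ?thesis by (simp add: matrix_matrix_mult_def)
qed

lemma pf_subst:
  fixes A B :: "complex^'n^'n"
  assumes "p \<in> poly_fun" shows "(\<lambda>x. p (A ** x ** B)) \<in> poly_fun"
  using assms
proof (induction p rule: poly_fun.induct)
  case (pf_const c) then show ?case by (rule poly_fun.pf_const)
next
  case (pf_coord i j)
  have "(\<lambda>x::complex^'n^'n. \<Sum>k\<in>UNIV. (A ** x)$i$k * B$k$j) \<in> poly_fun"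
    by (rule pf_sum) (auto intro: poly_fun.pf_mult poly_fun.pf_const pf_left)
  then show ?case by (simp add: matrix_matrix_mult_def[of "A ** _" B])
next
  case (pf_add p q) then show ?case using poly_fun.pf_add[OF pf_add.IH] by simp
next
  case (pf_mult p q) then show ?case using poly_fun.pf_mult[OF pf_mult.IH] by simp
qed


lemma sg:
  fixes G :: "(complex^'n^'n) set"
  assumes "matrix_subgroup G"
  shows "mat 1 \<in> G" "\<And>x. x \<in> G \<Longrightarrow> invertible x"
    "\<And>x y. x \<in> G \<Longrightarrow> y \<in> G \<Longrightarrow> x ** y \<in> G"
    "\<And>x. x \<in> G \<Longrightarrow> matrix_inv x \<in> G"
  using assms unfolding matrix_subgroup_def by auto

lemma hom_one:
  fixes G :: "(complex^'n^'n) set"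
  assumes "matrix_subgroup G" "\<sigma> ` G \<subseteq> G" "\<forall>x\<in>G. \<forall>y\<in>G. \<sigma> (x ** y) = \<sigma> x ** \<sigma> y"
  shows "\<sigma> (mat 1) = mat 1"
proof -
  have a: "\<sigma> (mat 1) \<in> G" using assms sg(1) by blast
  have "\<sigma> (mat 1) = \<sigma> (mat 1) ** \<sigma> (mat 1)"
    using assms(3) sg(1)[OF assms(1)] by (metis matrix_mul_lid)
  then have "matrix_inv (\<sigma> (mat 1)) ** \<sigma> (mat 1) = matrix_inv (\<sigma> (mat 1)) ** \<sigma> (mat 1) ** \<sigma> (mat 1)"
    by (metis matrix_mul_assoc)
  then show ?thesis using mi(2)[OF sg(2)[OF assms(1) a]] by simp
qed

lemma hom_inv:
  fixes G :: "(complex^'n^'n) set"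
  assumes "matrix_subgroup G" "\<sigma> ` G \<subseteq> G" "\<forall>x\<in>G. \<forall>y\<in>G. \<sigma> (x ** y) = \<sigma> x ** \<sigma> y"
    and "x \<in> G"
  shows "\<sigma> (matrix_inv x) = matrix_inv (\<sigma> x)"
proof -
  have "\<sigma> x ** \<sigma> (matrix_inv x) = \<sigma> (x ** matrix_inv x)"
    using assms sg[OF assms(1)] by metis
  also have "\<dots> = mat 1" using mi(1)[OF sg(2)[OF assms(1,4)]] hom_one[OF assms(1-3)] by simp
  finally show ?thesis using mi_unique by metis
qed

lemma coh_equiv:
  fixes G :: "(complex^'n^'n) set"
  assumes sgG: "matrix_subgroup G" and sG: "\<sigma> ` G \<subseteq> G"
    and hom: "\<forall>x\<in>G. \<forall>y\<in>G. \<sigma> (x ** y) = \<sigma> x ** \<sigma> y"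
  shows "equiv (Z1 G \<sigma>) (coh_rel G \<sigma>)"
proof (rule equivI)
  note s = sg[OF sgG]
  have one: "\<sigma> (mat 1) = mat 1" by (rule hom_one[OF assms])
  have i1: "matrix_inv (mat 1 :: complex^'n^'n) = mat 1" by (rule mi_unique) simp
  show "refl_on (Z1 G \<sigma>) (coh_rel G \<sigma>)"
    unfolding refl_on_def coh_rel_def
    using s(1) one i1 by force
  show "sym (coh_rel G \<sigma>)"
  proof (rule symI)
    fix a b assume "(a, b) \<in> coh_rel G \<sigma>"
    then obtain c where c: "c \<in> G" "a \<in> Z1 G \<sigma>" "b \<in> Z1 G \<sigma>" "b = matrix_inv c ** a ** \<sigma> c"
      unfolding coh_rel_def by auto
    have ic: "invertible c" "invertible (\<sigma> c)" using c(1) s(2) sG by auto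
    have "matrix_inv (matrix_inv c) = c" by (rule mi_unique) (rule mi(2)[OF ic(1)])
    then have "a = matrix_inv (matrix_inv c) ** b ** \<sigma> (matrix_inv c)"
      using c(4) hom_inv[OF assms c(1)] by (simp add: matrix_mul_assoc mi[OF ic(1)] mi_canc[OF ic(2)])
    then show "(b, a) \<in> coh_rel G \<sigma>" unfolding coh_rel_def using c s(4) by blast
  qed
  show "trans (coh_rel G \<sigma>)"
  proof (rule transI)
    fix a b d assume "(a, b) \<in> coh_rel G \<sigma>" "(b, d) \<in> coh_rel G \<sigma>"
    then obtain c e where c: "c \<in> G" "e \<in> G" "a \<in> Z1 G \<sigma>" "d \<in> Z1 G \<sigma>" "b = matrix_inv c ** a ** \<sigma> c"
       "d = matrix_inv e ** b ** \<sigma> e"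
      unfolding coh_rel_def by auto
    have ic: "invertible c" "invertible e" using c s(2) by auto
    have "matrix_inv (c ** e) = matrix_inv e ** matrix_inv c"
      by (rule mi_unique) (simp add: matrix_mul_assoc mi_canc ic mi[OF ic(2)] mi[OF ic(1)])
    then have "d = matrix_inv (c ** e) ** a ** \<sigma> (c ** e)"
      using c hom by (simp add: matrix_mul_assoc)
    then show "(a, d) \<in> coh_rel G \<sigma>" unfolding coh_rel_def using c s(3) by blast
  qed
  show "coh_rel G \<sigma> \<subseteq> Z1 G \<sigma> \<times> Z1 G \<sigma>" unfolding coh_rel_def by auto
qed


theorem proposition3p2:
  fixes G :: "(complex^'n^'n) set" and \<tau> :: "complex^'n^'n \<Rightarrow> complex^'n^'n"
    and Y :: "'y set" and act :: "'y \<Rightarrow> complex^'n^'n \<Rightarrow> 'y" and cY :: "'y \<Rightarrow> 'y"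
    and y0 :: 'y and gy0 z :: "complex^'n^'n" and H :: "(complex^'n^'n) set"
  assumes "real_group G \<tau>"
    and "right_homogeneous_space G Y act"
    and "compatible_conj G \<tau> Y act cY"
    and "y0 \<in> Y"
    and H_def: "H = stabilizer G act y0"
    and "gy0 \<in> G" and "cY y0 = act y0 gy0"
    and "z \<in> {h ** gy0 | h. h \<in> H}"
    and "z ** \<tau> z = mat 1"
  shows "anti_regular_involution G (twist \<tau> z)
    \<and> twist \<tau> z ` H = H
    \<and> (\<forall>h\<in>Z1 H (twist \<tau> z). h \<in> Z1 G (twist \<tau> z) \<and> h ** z \<in> Z1 G \<tau>)
    \<and> (\<forall>h\<in>Z1 H (twist \<tau> z). \<forall>h'\<in>cls H (twist \<tau> z) h.
          cls G (twist \<tau> z) h' = cls G (twist \<tau> z) h \<and> cls G \<tau> (h' ** z) = cls G \<tau> (h ** z))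
    \<and> ((\<exists>z'. z' \<in> {h ** gy0 | h. h \<in> H} \<inter> B1 G \<tau>) \<longleftrightarrow>
       cls G \<tau> (mat 1) \<in> (\<lambda>h. cls G \<tau> (h ** z)) ` Z1 H (twist \<tau> z))"
proof -
  have sgG: "matrix_subgroup G" using assms(1) unfolding real_group_def linear_algebraic_group_def by blast
  note s = sg[OF sgG]
  have ari: "anti_regular_involution G \<tau>" using assms(1) unfolding real_group_def by blast
  have tG: "\<tau> ` G \<subseteq> G" and tar: "\<And>f. regular_on G f \<Longrightarrow> regular_on G (\<lambda>x. cnj (f (\<tau> x)))"
    using ari unfolding anti_regular_involution_def anti_regular_def by auto
  have thom: "\<forall>x\<in>G. \<forall>y\<in>G. \<tau> (x ** y) = \<tau> x ** \<tau> y" and tinv: "\<And>x. x \<in> G \<Longrightarrow> \<tau> (\<tau> x) = x"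
    using ari unfolding anti_regular_involution_def by auto
  have HG: "H \<subseteq> G" unfolding H_def stabilizer_def by auto
  obtain h0 where h0: "h0 \<in> H" "z = h0 ** gy0" using assms(8) by auto
  have zG: "z \<in> G" using h0 HG assms(6) s(3) by auto
  have iz: "invertible z" using zG s(2) by auto
  have tz: "\<tau> z = matrix_inv z" using mi_unique[OF assms(9)] by simp
  have tiz: "\<tau> (matrix_inv z) = z"
    using hom_inv[OF sgG tG thom zG] tz mi_unique[OF mi(2)[OF iz]] by simp
  have izG: "matrix_inv z \<in> G" using s(4) zG by auto
  have hs: "right_homogeneous_space G Y act" by fact
  have act1: "\<And>y. y \<in> Y \<Longrightarrow> act y (mat 1) = y"
    and act2: "\<And>y g h. y \<in> Y \<Longrightarrow> g \<in> G \<Longrightarrow> h \<in> G \<Longrightarrow> act (act y g) h = act y (g ** h)"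
    and actY: "\<And>y g. y \<in> Y \<Longrightarrow> g \<in> G \<Longrightarrow> act y g \<in> Y"
    using hs unfolding right_homogeneous_space_def by auto
  have cc: "\<And>y g. y \<in> Y \<Longrightarrow> g \<in> G \<Longrightarrow> cY (act y g) = act (cY y) (\<tau> g)"
    using assms(3) unfolding compatible_conj_def by auto
  have Hm: "\<And>h. h \<in> H \<longleftrightarrow> h \<in> G \<and> act y0 h = y0" unfolding H_def stabilizer_def by auto
  have y0z: "act y0 z = cY y0"
    using h0 assms(6,7,4) Hm act2 by metis
  define \<phi> where "\<phi> = twist \<tau> z"
  have phi: "\<And>x. \<phi> x = z ** \<tau> x ** matrix_inv z" unfolding \<phi>_def twist_def by simp
  have pG: "\<phi> ` G \<subseteq> G" using phi tG zG izG s(3) by auto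
  have phom: "\<forall>x\<in>G. \<forall>y\<in>G. \<phi> (x ** y) = \<phi> x ** \<phi> y"
    using thom by (simp add: phi matrix_mul_assoc mi_canc[OF iz])
  have pinv: "\<And>x. x \<in> G \<Longrightarrow> \<phi> (\<phi> x) = x"
  proof -
    fix x assume x: "x \<in> G"
    have "\<phi> (\<phi> x) = z ** (\<tau> z ** \<tau> (\<tau> x) ** \<tau> (matrix_inv z)) ** matrix_inv z"
      using thom x zG izG tG s(3) by (simp add: phi) (metis image_subset_iff)
    also have "\<dots> = x" using tinv[OF x] tz tiz by (simp add: matrix_mul_assoc mi[OF iz] mi_canc[OF iz])
    finally show "\<phi> (\<phi> x) = x" .
  qed
  have par: "anti_regular G \<phi>"
    unfolding anti_regular_def
  proof (intro conjI allI impI)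
    show "\<phi> ` G \<subseteq> G" by (rule pG)
    fix f assume "regular_on G f"
    then obtain p k where p: "p \<in> poly_fun" "\<forall>x\<in>G. f x = p x / det x ^ k"
      unfolding regular_on_def by blast
    have dz: "det z * det (matrix_inv z) = 1" using det_mul[of z "matrix_inv z"] mi(1)[OF iz] by simp
    have "regular_on G (\<lambda>x. f (z ** x ** matrix_inv z))"
      unfolding regular_on_def
    proof (intro bexI exI ballI)
      fix x assume x: "x \<in> G"
      have "z ** x ** matrix_inv z \<in> G" using x zG izG s(3) by auto
      moreover have "det (z ** x ** matrix_inv z) = det x"
        using dz by (simp add: det_mul)
      ultimately show "f (z ** x ** matrix_inv z) = p (z ** x ** matrix_inv z) / det x ^ k"
        using p(2) by simp
    qed (rule pf_subst[OF p(1)])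
    from tar[OF this] show "regular_on G (\<lambda>x. cnj (f (\<phi> x)))" by (simp add: phi)
  qed
  have P1: "anti_regular_involution G \<phi>"
    unfolding anti_regular_involution_def using par phom pinv by blast
  have pH: "\<And>h. h \<in> H \<Longrightarrow> \<phi> h \<in> H"
  proof -
    fix h assume h: "h \<in> H"
    have hG: "h \<in> G" using h HG by auto
    have "act (act y0 z) (\<tau> h) = act y0 z"
      using cc[OF assms(4) hG] h Hm y0z by simp
    then have "act y0 (\<phi> h) = act y0 (z ** matrix_inv z)"
      using act2 assms(4) zG izG tG hG s(3) actY by (simp add: phi) (metis image_subset_iff)
    then show "\<phi> h \<in> H" using Hm pG hG act1 assms(4) mi(1)[OF iz] by auto
  qed
  have P2: "\<phi> ` H = H"
  proof
    show "\<phi> ` H \<subseteq> H" using pH by auto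
    show "H \<subseteq> \<phi> ` H"
    proof
      fix h assume "h \<in> H"
      then show "h \<in> \<phi> ` H" using pH pinv HG by (metis image_eqI subsetD)
    qed
  qed
  have eqG: "equiv (Z1 G \<tau>) (coh_rel G \<tau>)" by (rule coh_equiv[OF sgG tG thom])
  have eqP: "equiv (Z1 G \<phi>) (coh_rel G \<phi>)" by (rule coh_equiv[OF sgG pG phom])
  have hz: "\<And>h. h \<in> Z1 H \<phi> \<Longrightarrow> h ** z \<in> Z1 G \<tau>"
  proof -
    fix h assume h: "h \<in> Z1 H \<phi>"
    then have hG: "h \<in> G" and hp: "h ** \<phi> h = mat 1" using HG unfolding Z1_def by auto
    have "h ** z ** \<tau> (h ** z) = h ** \<phi> h"
      using thom hG zG tz by (simp add: phi matrix_mul_assoc)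
    then show "h ** z \<in> Z1 G \<tau>" using hp hG zG s(3) unfolding Z1_def by auto
  qed
  have P3: "\<forall>h\<in>Z1 H \<phi>. h \<in> Z1 G \<phi> \<and> h ** z \<in> Z1 G \<tau>"
    using hz HG unfolding Z1_def by auto
  have P4: "\<forall>h\<in>Z1 H \<phi>. \<forall>h'\<in>cls H \<phi> h.
          cls G \<phi> h' = cls G \<phi> h \<and> cls G \<tau> (h' ** z) = cls G \<tau> (h ** z)"
  proof (intro ballI)
    fix h h' assume h: "h \<in> Z1 H \<phi>" and h': "h' \<in> cls H \<phi> h"
    then obtain b where b: "b \<in> H" "h' \<in> Z1 H \<phi>" "h' = matrix_inv b ** h ** \<phi> b"
      unfolding cls_def coh_rel_def by auto
    have bG: "b \<in> G" using b HG by auto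
    have "(h, h') \<in> coh_rel G \<phi>" using P3 h b bG unfolding coh_rel_def by auto
    then have 1: "cls G \<phi> h' = cls G \<phi> h" unfolding cls_def using equiv_class_eq[OF eqP] by metis
    have "h' ** z = matrix_inv b ** (h ** z) ** \<tau> b"
      using b(3) by (simp add: phi matrix_mul_assoc mi_canc[OF iz])
    moreover have "h' ** z \<in> Z1 G \<tau>" "h ** z \<in> Z1 G \<tau>" using hz[OF b(2)] hz[OF h] by auto
    ultimately have "(h ** z, h' ** z) \<in> coh_rel G \<tau>" using bG unfolding coh_rel_def by blast
    then have 2: "cls G \<tau> (h' ** z) = cls G \<tau> (h ** z)" unfolding cls_def using equiv_class_eq[OF eqG] by metis
    show "cls G \<phi> h' = cls G \<phi> h \<and> cls G \<tau> (h' ** z) = cls G \<tau> (h ** z)" using 1 2 by blast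
  qed
  have one: "\<tau> (mat 1) = mat 1" by (rule hom_one[OF sgG tG thom])
  have i1: "matrix_inv (mat 1 :: complex^'n^'n) = mat 1" by (rule mi_unique) simp
  have oneZ: "mat 1 \<in> Z1 G \<tau>" unfolding Z1_def using s(1) one by simp
  have P5: "(\<exists>z'. z' \<in> {h ** gy0 | h. h \<in> H} \<inter> B1 G \<tau>) \<longleftrightarrow>
       cls G \<tau> (mat 1) \<in> (\<lambda>h. cls G \<tau> (h ** z)) ` Z1 H \<phi>"
  proof
    assume "\<exists>z'. z' \<in> {h ** gy0 | h. h \<in> H} \<inter> B1 G \<tau>"
    then obtain h1 g where h1: "h1 \<in> H" "g \<in> G" "h1 ** gy0 = matrix_inv g ** \<tau> g"
      unfolding B1_def by auto
    define z' where "z' = h1 ** gy0"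
    have ig: "invertible g" "invertible (\<tau> g)" using h1 s(2) tG by auto
    have z'G: "z' \<in> G" unfolding z'_def using h1(1) HG assms(6) s(3) by blast
    define h where "h = z' ** matrix_inv z"
    have hG: "h \<in> G" using z'G izG s(3) h_def by auto
    have "act y0 z' = cY y0" using h1 assms(6,7,4) Hm act2 z'_def by metis
    then have "act y0 h = act (act y0 z) (matrix_inv z)"
      unfolding h_def using act2[OF assms(4) z'G izG] y0z by simp
    also have "\<dots> = y0" using act2[OF assms(4) zG izG] mi(1)[OF iz] act1[OF assms(4)] by simp
    finally have "act y0 h = y0" .
    then have hH: "h \<in> H" using Hm hG by auto
    have hzz: "h ** z = z'" using h_def by (simp add: mi_canc[OF iz])
    have "h ** \<phi> h = z' ** \<tau> z'"
      using thom z'G izG tiz by (simp add: phi h_def matrix_mul_assoc mi_canc[OF iz])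
    also have "\<dots> = mat 1"
    proof -
      have "\<tau> z' = matrix_inv (\<tau> g) ** g"
        unfolding z'_def h1(3) using thom s(4)[OF h1(2)] tG h1(2) tinv[OF h1(2)] hom_inv[OF sgG tG thom h1(2)]
        by (metis image_subset_iff)
      then show ?thesis unfolding z'_def h1(3)
        by (simp add: matrix_mul_assoc mi_canc[OF ig(2)] mi(2)[OF ig(1)])
    qed
    finally have hZ: "h \<in> Z1 H \<phi>" using hH unfolding Z1_def by auto
    have "(mat 1, h ** z) \<in> coh_rel G \<tau>"
      using oneZ hz[OF hZ] h1 hzz z'_def unfolding coh_rel_def by auto
    then have "cls G \<tau> (mat 1) = cls G \<tau> (h ** z)" unfolding cls_def using equiv_class_eq[OF eqG] by metis
    then show "cls G \<tau> (mat 1) \<in> (\<lambda>h. cls G \<tau> (h ** z)) ` Z1 H \<phi>" using hZ by blast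
  next
    assume "cls G \<tau> (mat 1) \<in> (\<lambda>h. cls G \<tau> (h ** z)) ` Z1 H \<phi>"
    then obtain h where hZ: "h \<in> Z1 H \<phi>" and e: "cls G \<tau> (mat 1) = cls G \<tau> (h ** z)" by auto
    have "h ** z \<in> cls G \<tau> (h ** z)"
      using hz[OF hZ] eqG unfolding cls_def equiv_def refl_on_def by auto
    then have "(mat 1, h ** z) \<in> coh_rel G \<tau>" using e unfolding cls_def by auto
    then obtain b where b: "b \<in> G" "h ** z = matrix_inv b ** mat 1 ** \<tau> b" unfolding coh_rel_def by auto
    have "h ** z \<in> B1 G \<tau>" unfolding B1_def using b by auto
    moreover have "h ** z \<in> {h ** gy0 | h. h \<in> H}"
    proof -
      have hH: "h \<in> H" using hZ unfolding Z1_def by auto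
      then have "h \<in> G" "act y0 h = y0" "h0 \<in> G" "act y0 h0 = y0" using h0(1) Hm by auto
      then have "act y0 (h ** h0) = y0" using act2[OF assms(4), of h h0] by simp
      then have "h ** h0 \<in> H" using Hm s(3) \<open>h \<in> G\<close> \<open>h0 \<in> G\<close> by auto
      then show ?thesis using h0 by (auto simp: matrix_mul_assoc)
    qed
    ultimately show "\<exists>z'. z' \<in> {h ** gy0 | h. h \<in> H} \<inter> B1 G \<tau>" by blast
  qed
  show ?thesis using P1 P2 P3 P4 P5 unfolding \<phi>_def by blast
qed

end
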